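(* On $\mathcal H=\mathbb C^3$ with orthonormal basis $\{|0\rangle,|1\rangle,|2\rangle\}$, let $A_1=\tfrac14\big(2|0\rangle\langle0|+|2\rangle\langle2|+\sqrt2(|0\rangle\langle2|+|2\rangle\langle0|)\big)$, $A_2=I-A_1$, $B_1=\tfrac12\big(2|0\rangle\langle0|+|2\rangle\langle2|\big)$, $B_2=I-B_1$. Then there is no POVM $\{G_\lambda\}_\lambda$ with $\|G_\lambda\|=1$ for all $\lambda$ such that both $\{A_a\}$ and $\{B_b\}$ are classical post-processings of $\{G_\lambda\}$; consequently the set $\{\{A_a\},\{B_b\}\}$ allows for a proof of contextuality of quantum theory.
   Context: $\|\cdot\|$ is the operator norm. A classical post-processing of $\{G_\lambda\}$ is a POVM $A_k=\sum_\lambda p(k|\lambda)G_\lambda$ with $p(\cdot|\lambda)$ probability distributions. A set of observables $\mathcal A$ allows for a proof of contextuality of quantum theory if there do not exist a POVM $\{G_\lambda\}$ and states $\{\sigma_\lambda\}$ (finite index set) with $A_k=\sum_\lambda\mathrm{tr}[\sigma_\lambda A_k]G_\lambda$ for all $\{A_k\}\in\mathcal A$ and all $k$. *)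

theory Defs
  imports "HOL-Analysis.Analysis"
begin

text \<open>Operators on the Hilbert space C^3, represented as 3x3 complex matrices;
 the basis vectors |0>,|1>,|2> correspond to the indices 0,1,2 of the type 3.\<close>

type_synonym cmat = "complex^3^3"

definition ket :: "3 \<Rightarrow> complex^3" where
  "ket i = (\<chi> j. if j = i then 1 else 0)"

definition ketbra :: "3 \<Rightarrow> 3 \<Rightarrow> cmat" where
  "ketbra i j = (\<chi> r c. ket i $ r * cnj (ket j $ c))"

definition csmult :: "complex \<Rightarrow> cmat \<Rightarrow> cmat" where
  "csmult a M = (\<chi> r c. a * M $ r $ c)"

definition cinner :: "complex^3 \<Rightarrow> complex^3 \<Rightarrow> complex" where
  "cinner x y = (\<Sum>i\<in>UNIV. cnj (x $ i) * y $ i)"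

definition psd :: "cmat \<Rightarrow> bool" where
  "psd M \<longleftrightarrow> (\<forall>x. cinner x (M *v x) \<in> \<real> \<and> 0 \<le> Re (cinner x (M *v x)))"

definition trace :: "cmat \<Rightarrow> complex" where
  "trace M = (\<Sum>i\<in>UNIV. M $ i $ i)"

definition density :: "cmat \<Rightarrow> bool" where
  "density \<sigma> \<longleftrightarrow> psd \<sigma> \<and> trace \<sigma> = 1"

definition opnorm :: "cmat \<Rightarrow> real" where
  "opnorm M = onorm (\<lambda>x. M *v x)"

definition povm :: "nat set \<Rightarrow> (nat \<Rightarrow> cmat) \<Rightarrow> bool" where
  "povm I G \<longleftrightarrow> finite I \<and> (\<forall>i\<in>I. psd (G i)) \<and> (\<Sum>i\<in>I. G i) = mat 1"

definition postproc :: "nat set \<Rightarrow> (nat \<Rightarrow> cmat) \<Rightarrow> nat set \<Rightarrow> (nat \<Rightarrow> cmat) \<Rightarrow> bool" where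
  "postproc K A L G \<longleftrightarrow> (\<exists>p :: nat \<Rightarrow> nat \<Rightarrow> real.
      (\<forall>l\<in>L. (\<forall>k\<in>K. 0 \<le> p k l) \<and> (\<Sum>k\<in>K. p k l) = 1) \<and>
      (\<forall>k\<in>K. A k = (\<Sum>l\<in>L. csmult (complex_of_real (p k l)) (G l))))"

definition allows_contextuality_proof :: "(nat set \<times> (nat \<Rightarrow> cmat)) set \<Rightarrow> bool" where
  "allows_contextuality_proof \<A> \<longleftrightarrow>
     \<not> (\<exists>L G \<sigma>. povm L G \<and> (\<forall>l\<in>L. density (\<sigma> l)) \<and>
          (\<forall>(K, A)\<in>\<A>. \<forall>k\<in>K. A k = (\<Sum>l\<in>L. csmult (trace (\<sigma> l ** A k)) (G l))))"

definition A1 :: cmat where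
  "A1 = csmult (1/4) (csmult 2 (ketbra 0 0) + ketbra 2 2
          + csmult (complex_of_real (sqrt 2)) (ketbra 0 2 + ketbra 2 0))"

definition B1 :: cmat where
  "B1 = csmult (1/2) (csmult 2 (ketbra 0 0) + ketbra 2 2)"

definition Aobs :: "nat \<Rightarrow> cmat" where
  "Aobs k = (if k = 1 then A1 else mat 1 - A1)"

definition Bobs :: "nat \<Rightarrow> cmat" where
  "Bobs k = (if k = 1 then B1 else mat 1 - B1)"

end

theory Submission
  imports Defs
begin

definition Q :: "cmat \<Rightarrow> complex^3 \<Rightarrow> real" where "Q M x = Re (cinner x (M *v x))"
definition uu :: "complex^3" where "uu = (\<chi> i. if i = 0 then complex_of_real (sqrt 2) else if i = 2 then 1 else 0)"
definition ww :: "complex^3" where "ww = (\<chi> i. if i = 0 then 1 else if i = 2 then - complex_of_real (sqrt 2) else 0)"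

lemma three0: "(3::3) = 0" by simp
lemma sum3: "sum f (UNIV::3 set) = f 0 + f 1 + f 2"
  unfolding sum_3 three0 by (metis add.commute add.left_commute)
lemma all3: "(\<forall>i::3. P i) \<longleftrightarrow> P 0 \<and> P 1 \<and> P 2"
  using forall_3[of P] unfolding three0 by blast
lemma s2[simp]: "complex_of_real (sqrt 2) * complex_of_real (sqrt 2) = 2"
  by (simp flip: of_real_mult)

lemma cinner_add_left: "cinner (x + y) z = cinner x z + cinner y z"
  by (simp add: cinner_def sum.distrib algebra_simps)
lemma cinner_add_right: "cinner z (x + y) = cinner z x + cinner z y"
  by (simp add: cinner_def sum.distrib algebra_simps)
lemma cinner_smult_left: "cinner (c *s x) y = cnj c * cinner x y"
  by (simp add: cinner_def sum_distrib_left algebra_simps)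
lemma cinner_smult_right: "cinner x (c *s y) = c * cinner x y"
  by (simp add: cinner_def sum_distrib_left algebra_simps)
lemma mv_smult: "(M::cmat) *v (c *s x) = c *s (M *v x)"
  by (auto simp: vec_eq_iff matrix_vector_mult_def sum_distrib_left intro!: sum.cong)
lemma cinner_self: "cinner x x = complex_of_real (\<Sum>i\<in>UNIV. (cmod (x $ i))^2)"
proof -
  have "\<And>z. cnj z * z = complex_of_real ((cmod z)^2)"
    by (metis complex_norm_square mult.commute of_real_power)
  then show ?thesis by (simp add: cinner_def of_real_sum)
qed
lemma cinner_self_eq0: "Re (cinner x x) = 0 \<Longrightarrow> x = 0"
proof -
  assume "Re (cinner x x) = 0"
  then have "(\<Sum>i\<in>UNIV. (cmod (x $ i))^2) = 0" by (simp add: cinner_self)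
  then have "\<forall>i\<in>UNIV. (cmod (x $ i))^2 = 0"
    by (subst (asm) sum_nonneg_eq_0_iff) auto
  then show "x = 0" by (simp add: vec_eq_iff)
qed

lemma expand: "cinner (x + c *s y) (M *v (x + c *s y)) =
   cinner x (M *v x) + c * cinner x (M *v y) + cnj c * cinner y (M *v x) + cnj c * c * cinner y (M *v y)"
  by (simp add: matrix_vector_right_distrib mv_smult cinner_add_left cinner_add_right
      cinner_smult_left cinner_smult_right algebra_simps)

lemma psd_real: "psd M \<Longrightarrow> Im (cinner x (M *v x)) = 0"
  by (simp add: psd_def complex_is_Real_iff)

lemma psd_herm: assumes "psd M" shows "cinner x (M *v y) = cnj (cinner y (M *v x))"
proof -
  have h1: "Im (cinner (x + 1 *s y) (M *v (x + 1 *s y))) = 0" using psd_real[OF assms] by blast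
  have h2: "Im (cinner (x + \<i> *s y) (M *v (x + \<i> *s y))) = 0" using psd_real[OF assms] by blast
  have a: "Im (cinner x (M *v x)) = 0" "Im (cinner y (M *v y)) = 0" using psd_real[OF assms] by auto
  from h1 h2 a show ?thesis unfolding expand by (simp add: complex_eq_iff)
qed

lemma psd_Q: "psd M \<Longrightarrow> 0 \<le> Q M x" by (simp add: psd_def Q_def)

lemma psd_zero: assumes "psd M" "Q M x = 0" shows "M *v x = 0"
proof -
  define y where "y = M *v x"
  define n where "n = Re (cinner y y)"
  define R where "R = Q M y"
  have n0: "n \<ge> 0" unfolding n_def cinner_self by (simp add: sum_nonneg)
  have R0: "R \<ge> 0" unfolding R_def using psd_Q[OF assms(1)] .
  have b: "cinner y (M *v x) = complex_of_real n"
    unfolding n_def y_def[symmetric] cinner_self by simp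
  have a: "cinner x (M *v y) = complex_of_real n"
    using psd_herm[OF assms(1), of x y] b by simp
  have key: "\<And>s. 0 \<le> 2 * s * n + s * s * R"
  proof -
    fix s :: real
    have "0 \<le> Q M (x + complex_of_real s *s y)" by (rule psd_Q[OF assms(1)])
    also have "Q M (x + complex_of_real s *s y) = 2 * s * n + s * s * R"
      unfolding Q_def expand a b using assms(2) unfolding Q_def R_def
      by (simp add: )
    finally show "0 \<le> 2 * s * n + s * s * R" .
  qed
  have "n = 0"
  proof (rule ccontr)
    assume "n \<noteq> 0" then have np: "n > 0" using n0 by simp
    define s where "s = - n / (R + 1)"
    have sneg: "s < 0" unfolding s_def using np R0 by (simp add: field_simps)
    have "s * R > - n" unfolding s_def using np R0 by (simp add: field_simps)
    then have "2 * n + s * R > 0" using np by simp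
    then have "s * (2 * n + s * R) < 0" using sneg by (simp add: mult_neg_pos)
    with key[of s] show False by (simp add: algebra_simps)
  qed
  then show ?thesis using cinner_self_eq0 unfolding n_def y_def by blast
qed

lemma mv_ket: "((M::cmat) *v ket c) $ r = M $ r $ c"
  by (simp add: matrix_vector_mult_def ket_def if_distrib cong: if_cong)
lemma cinner_ket: "cinner (ket r) y = y $ r"
proof -
  have "\<And>i. cnj (ket r $ i) * y $ i = (if i = r then y $ r else 0)" by (simp add: ket_def)
  then show ?thesis unfolding cinner_def by simp
qed
lemma entry: "cinner (ket r) ((M::cmat) *v ket c) = M $ r $ c"
  by (simp add: cinner_ket mv_ket)
lemma mv_ww: "((M::cmat) *v ww) $ r = M $ r $ 0 - complex_of_real (sqrt 2) * M $ r $ 2"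
  by (simp add: matrix_vector_mult_def ww_def sum3)

lemma A1_entries: "A1 $ 0 $ 0 = 1/2" "A1 $ 0 $ 1 = 0" "A1 $ 0 $ 2 = complex_of_real (sqrt 2) / 4"
  "A1 $ 1 $ 0 = 0" "A1 $ 1 $ 1 = 0" "A1 $ 1 $ 2 = 0"
  "A1 $ 2 $ 0 = complex_of_real (sqrt 2) / 4" "A1 $ 2 $ 1 = 0" "A1 $ 2 $ 2 = 1/4"
  by (simp_all add: A1_def csmult_def ketbra_def ket_def)

lemma keyK: assumes "psd G" "Q G ww = 0" "Q G (ket 1) = 0"
  shows "\<exists>d\<ge>0. G = csmult (complex_of_real d) (csmult 4 A1)"
proof -
  have z1: "G *v ket 1 = 0" using psd_zero assms by blast
  have zw: "G *v ww = 0" using psd_zero assms by blast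
  have c1: "G $ r $ 1 = 0" for r using z1 mv_ket[of G 1 r] by simp
  have cw: "G $ r $ 0 = complex_of_real (sqrt 2) * G $ r $ 2" for r
    using zw mv_ww[of G r] by simp
  have h: "G $ r $ c = cnj (G $ c $ r)" for r c
    using psd_herm[OF assms(1), of "ket r" "ket c"] by (simp add: entry)
  define d where "d = Re (G $ 2 $ 2)"
  have g22: "G $ 2 $ 2 = complex_of_real d"
    using h[of 2 2] unfolding d_def by (simp add: complex_eq_iff)
  have d0: "d \<ge> 0" using psd_Q[OF assms(1), of "ket 2"] unfolding Q_def entry d_def .
  have g20: "G $ 2 $ 0 = complex_of_real (sqrt 2) * complex_of_real d" using cw[of 2] g22 by simp
  have g02: "G $ 0 $ 2 = complex_of_real (sqrt 2) * complex_of_real d" using h[of 0 2] g20 by simp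
  have g00: "G $ 0 $ 0 = 2 * complex_of_real d" using cw[of 0] g02
    by (simp add: mult.assoc[symmetric])
  have g1c: "G $ 1 $ c = 0" for c using h[of 1 c] c1[of c] by simp
  have "G = csmult (complex_of_real d) (csmult 4 A1)"
    unfolding vec_eq_iff all3 using g22 g20 g02 g00 g1c c1
    by (simp add: csmult_def A1_entries mult.commute)
  with d0 show ?thesis by blast
qed

lemma mv_csmult: "csmult c M *v x = c *s (M *v x)"
  by (simp add: vec_eq_iff matrix_vector_mult_def csmult_def sum_distrib_left mult.assoc)
lemma Q_add: "Q (A + B) x = Q A x + Q B x"
  by (simp add: Q_def matrix_vector_mult_add_rdistrib cinner_add_right)
lemma Q_csmult: "psd M \<Longrightarrow> Q (csmult c M) x = Re c * Q M x"
  using psd_real[of M x] by (simp add: Q_def mv_csmult cinner_smult_right)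
lemma Q_zero: "Q 0 x = 0" by (simp add: Q_def cinner_def)
lemma Qsum: assumes "finite L" "\<forall>l\<in>L. psd (G l)"
  shows "Q (\<Sum>l\<in>L. csmult (c l) (G l)) x = (\<Sum>l\<in>L. Re (c l) * Q (G l) x)"
  using assms by (induction L rule: finite_induct) (auto simp: Q_zero Q_add Q_csmult)

lemma QA1w: "Q A1 ww = 0"
  by (simp add: Q_def cinner_def A1_def ww_def sum3 matrix_vector_mult_def csmult_def ketbra_def ket_def algebra_simps)
lemma QA1e1: "Q A1 (ket 1) = 0"
  by (simp add: Q_def cinner_def A1_def sum3 matrix_vector_mult_def csmult_def ketbra_def ket_def algebra_simps)
lemma QA1e0: "Q A1 (ket 0) = 1/2"
  by (simp add: Q_def cinner_def A1_def sum3 matrix_vector_mult_def csmult_def ketbra_def ket_def algebra_simps)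
lemma QA1u: "Q A1 uu = 9/4"
  by (simp add: Q_def cinner_def A1_def uu_def sum3 matrix_vector_mult_def csmult_def ketbra_def ket_def algebra_simps)
lemma QB1u: "Q B1 uu = 5/2"
  by (simp add: Q_def cinner_def B1_def uu_def sum3 matrix_vector_mult_def csmult_def ketbra_def ket_def algebra_simps)
lemma QB2e0: "Q (mat 1 - B1) (ket 0) = 0"
  by (simp add: Q_def cinner_def B1_def sum3 matrix_vector_mult_def csmult_def ketbra_def ket_def algebra_simps mat_def)
lemma A1_ne0: "A1 \<noteq> 0"
proof
  assume "A1 = 0" then have "A1 $ 0 $ 0 = 0" by simp
  with A1_entries(1) show False by simp
qed


lemma opnorm_bound: assumes "d \<ge> 0"
  shows "opnorm (csmult (complex_of_real d) (csmult 4 A1)) \<le> 3 * d"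
  unfolding opnorm_def
proof (rule onorm_le)
  fix x :: "complex^3"
  define M where "M = csmult (complex_of_real d) (csmult 4 A1)"
  define y where "y = complex_of_real (sqrt 2) * x $ 0 + x $ 2"
  have m0: "(M *v x) $ 0 = complex_of_real d * complex_of_real (sqrt 2) * y"
    by (simp add: M_def y_def matrix_vector_mult_def sum3 csmult_def A1_entries algebra_simps)
  have m1: "(M *v x) $ 1 = 0"
    by (simp add: M_def matrix_vector_mult_def sum3 csmult_def A1_entries)
  have m2: "(M *v x) $ 2 = complex_of_real d * y"
    by (simp add: M_def y_def matrix_vector_mult_def sum3 csmult_def A1_entries algebra_simps)
  define p where "p = cmod (x $ 0)"
  define q where "q = cmod (x $ 2)"
  define r where "r = cmod (x $ 1)"
  have yb: "cmod y \<le> sqrt 2 * p + q" unfolding y_def p_def q_def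
    by (metis norm_mult norm_of_real norm_triangle_ineq real_sqrt_ge_zero abs_of_nonneg zero_le_numeral)
  have y0: "0 \<le> cmod y" by simp
  have "(cmod y)^2 \<le> (sqrt 2 * p + q)^2" using yb y0 by (simp add: power_mono)
  also have "\<dots> \<le> 3 * (p^2 + q^2)"
  proof -
    have "0 \<le> (p - sqrt 2 * q)^2" by simp
    then show ?thesis by (simp add: power2_eq_square algebra_simps)
  qed
  finally have yb2: "(cmod y)^2 \<le> 3 * (p^2 + q^2)" .
  have nM: "norm (M *v x) = sqrt (3 * d^2 * (cmod y)^2)"
    unfolding norm_vec_def L2_set_def sum3 m0 m1 m2
    by (simp add: norm_mult power_mult_distrib algebra_simps)
  have nx: "norm x = sqrt (p^2 + r^2 + q^2)"
    unfolding norm_vec_def L2_set_def sum3 p_def q_def r_def by simp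
  have "3 * d^2 * (cmod y)^2 \<le> (3*d)^2 * (p^2 + r^2 + q^2)"
  proof -
    have "3 * d^2 * (cmod y)^2 \<le> 3 * d^2 * (3 * (p^2 + q^2))"
      using yb2 by (simp add: mult_left_mono)
    also have "\<dots> \<le> (3*d)^2 * (p^2 + r^2 + q^2)"
      by (simp add: power_mult_distrib algebra_simps)
    finally show ?thesis .
  qed
  then have "sqrt (3 * d^2 * (cmod y)^2) \<le> sqrt ((3*d)^2 * (p^2 + r^2 + q^2))"
    by (rule real_sqrt_le_mono)
  also have "\<dots> = 3 * d * sqrt (p^2 + r^2 + q^2)"
    using assms by (simp add: real_sqrt_mult)
  finally show "norm (M *v x) \<le> 3 * d * norm x" using nM nx by simp
qed

lemma Q_csmult_real: "Q (csmult (complex_of_real r) M) x = r * Q M x"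
  by (simp add: Q_def mv_csmult cinner_smult_right)
lemma Q_G: "Q (csmult (complex_of_real d) (csmult 4 A1)) x = 4 * d * Q A1 x"
proof -
  have "csmult 4 A1 = csmult (complex_of_real 4) A1" by simp
  then show ?thesis by (simp only: Q_csmult_real)
qed

lemma sum_zero_term:
  assumes "finite L" "\<forall>m\<in>L. 0 \<le> f m" "(\<Sum>m\<in>L. f m) = (0::real)" "l \<in> L"
  shows "f l = 0"
  using assms sum_nonneg_eq_0_iff by blast

lemma part1: "\<not> (\<exists>L G. povm L G \<and> (\<forall>l\<in>L. opnorm (G l) = 1) \<and>
                postproc {1,2} Aobs L G \<and> postproc {1,2} Bobs L G)"
proof
  assume "\<exists>L G. povm L G \<and> (\<forall>l\<in>L. opnorm (G l) = 1) \<and>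
                postproc {1,2} Aobs L G \<and> postproc {1,2} Bobs L G"
  then obtain L G where pv: "povm L G" and nm: "\<forall>l\<in>L. opnorm (G l) = 1"
    and pa: "postproc {1,2} Aobs L G" and pb: "postproc {1,2} Bobs L G" by blast
  from pv have fin: "finite L" and ps: "\<forall>l\<in>L. psd (G l)" by (auto simp: povm_def)
  from pa obtain p where p: "\<forall>l\<in>L. (\<forall>k\<in>{1,2}. 0 \<le> p k l) \<and> (\<Sum>k\<in>{1,2}. p k l) = 1"
    and pe: "\<forall>k\<in>{1,2}. Aobs k = (\<Sum>l\<in>L. csmult (complex_of_real (p k l)) (G l))"
    unfolding postproc_def by blast
  from pb obtain q where q: "\<forall>l\<in>L. (\<forall>k\<in>{1,2}. 0 \<le> q k l) \<and> (\<Sum>k\<in>{1,2}. q k l) = 1"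
    and qe: "\<forall>k\<in>{1,2}. Bobs k = (\<Sum>l\<in>L. csmult (complex_of_real (q k l)) (G l))"
    unfolding postproc_def by blast
  have A1e: "A1 = (\<Sum>l\<in>L. csmult (complex_of_real (p 1 l)) (G l))"
    using pe by (simp add: Aobs_def)
  have B1e: "B1 = (\<Sum>l\<in>L. csmult (complex_of_real (q 1 l)) (G l))"
    using qe by (simp add: Bobs_def)
  have B2e: "mat 1 - B1 = (\<Sum>l\<in>L. csmult (complex_of_real (q 2 l)) (G l))"
    using qe by (simp add: Bobs_def)
  have p0: "\<forall>l\<in>L. 0 \<le> p 1 l" using p by simp
  have q0: "\<forall>l\<in>L. 0 \<le> q 1 l \<and> 0 \<le> q 2 l \<and> q 1 l + q 2 l = 1" using q by simp
  obtain l where lL: "l \<in> L" and pl: "p 1 l > 0"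
  proof (rule ccontr)
    assume "\<not> thesis"
    then have "\<forall>l\<in>L. p 1 l = 0" using p0 that by force
    then have "A1 = (\<Sum>l\<in>L. csmult 0 (G l))" using A1e by simp
    also have "\<dots> = 0" by (simp add: csmult_def vec_eq_iff sum.neutral)
    finally show False using A1_ne0 by simp
  qed
  have QAs: "Q A1 x = (\<Sum>m\<in>L. p 1 m * Q (G m) x)" for x
    using Qsum[OF fin ps, of "\<lambda>m. complex_of_real (p 1 m)" x] A1e by simp
  have QB1s: "Q B1 x = (\<Sum>m\<in>L. q 1 m * Q (G m) x)" for x
    using Qsum[OF fin ps, of "\<lambda>m. complex_of_real (q 1 m)" x] B1e by simp
  have QB2s: "Q (mat 1 - B1) x = (\<Sum>m\<in>L. q 2 m * Q (G m) x)" for x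
    using Qsum[OF fin ps, of "\<lambda>m. complex_of_real (q 2 m)" x] B2e by simp
  have nnA: "\<forall>m\<in>L. 0 \<le> p 1 m * Q (G m) x" for x using p0 ps psd_Q by auto
  have "p 1 l * Q (G l) ww = 0"
    using sum_zero_term[OF fin nnA _ lL] QAs[of ww] QA1w by simp
  then have Qw: "Q (G l) ww = 0" using pl by simp
  have "p 1 l * Q (G l) (ket 1) = 0"
    using sum_zero_term[OF fin nnA _ lL] QAs[of "ket 1"] QA1e1 by simp
  then have Q1: "Q (G l) (ket 1) = 0" using pl by simp
  obtain d where d0: "d \<ge> 0" and Gl: "G l = csmult (complex_of_real d) (csmult 4 A1)"
    using keyK[of "G l"] ps lL Qw Q1 by blast
  have "opnorm (G l) = 1" using nm lL by blast
  then have "1 \<le> 3 * d" using opnorm_bound[OF d0] unfolding Gl by linarith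
  have QGe0: "Q (G l) (ket 0) = 2 * d" unfolding Gl Q_G QA1e0 by simp
  have QGu: "Q (G l) uu = 9 * d" unfolding Gl Q_G QA1u by simp
  have nnB2: "\<forall>m\<in>L. 0 \<le> q 2 m * Q (G m) x" for x using q0 ps psd_Q by auto
  have "q 2 l * Q (G l) (ket 0) = 0"
    using sum_zero_term[OF fin nnB2 _ lL] QB2s[of "ket 0"] QB2e0 by simp
  then have "q 2 l = 0" using QGe0 \<open>1 \<le> 3 * d\<close> by simp
  then have q1l: "q 1 l = 1" using q0 lL by auto
  have nnB1: "\<forall>m\<in>L. 0 \<le> q 1 m * Q (G m) x" for x using q0 ps psd_Q by auto
  have "q 1 l * Q (G l) uu \<le> (\<Sum>m\<in>L. q 1 m * Q (G m) uu)"
    by (rule member_le_sum[OF lL]) (use nnB1 fin in auto)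
  then have "9 * d \<le> 5/2" using QB1s[of uu] QB1u q1l QGu by simp
  with \<open>1 \<le> 3 * d\<close> show False by simp
qed

lemma tA1: "trace (\<sigma> ** A1) = cinner uu (\<sigma> *v uu) / 4"
  by (simp add: trace_def matrix_matrix_mult_def cinner_def uu_def A1_entries sum3 matrix_vector_mult_def algebra_simps)
lemma tA1': "trace (\<sigma> ** A1) = \<sigma>$0$0/2 + complex_of_real (sqrt 2)/4 * (\<sigma>$0$2 + \<sigma>$2$0) + \<sigma>$2$2/4"
  by (simp add: trace_def matrix_matrix_mult_def A1_entries sum3 algebra_simps)
lemma tB1: "trace (\<sigma> ** B1) = \<sigma>$0$0 + \<sigma>$2$2/2"
  by (simp add: trace_def matrix_matrix_mult_def B1_def csmult_def ketbra_def ket_def sum3 algebra_simps)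
lemma tB2: "trace (\<sigma> ** (mat 1 - B1)) = \<sigma>$1$1 + \<sigma>$2$2/2"
  by (simp add: trace_def matrix_matrix_mult_def B1_def csmult_def ketbra_def ket_def sum3 mat_def algebra_simps)
lemma tr3: "trace \<sigma> = \<sigma>$0$0 + \<sigma>$1$1 + \<sigma>$2$2"
  by (simp add: trace_def sum3)

lemma diag_nn: "psd \<sigma> \<Longrightarrow> 0 \<le> Re (\<sigma>$r$r) \<and> Im (\<sigma>$r$r) = 0"
  using psd_Q[of \<sigma> "ket r"] psd_real[of \<sigma> "ket r"] by (simp add: Q_def entry)

lemma part2: "allows_contextuality_proof {({1,2}, Aobs), ({1,2}, Bobs)}"
  unfolding allows_contextuality_proof_def
proof
  assume "\<exists>L G \<sigma>. povm L G \<and> (\<forall>l\<in>L. density (\<sigma> l)) \<and>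
          (\<forall>(K, A)\<in>{({1,2}, Aobs), ({1,2}, Bobs)}. \<forall>k\<in>K. A k = (\<Sum>l\<in>L. csmult (trace (\<sigma> l ** A k)) (G l)))"
  then obtain L G \<sigma> where pv: "povm L G" and den: "\<forall>l\<in>L. density (\<sigma> l)"
    and eqs: "\<forall>(K, A)\<in>{({1,2}, Aobs), ({1,2}, Bobs)}. \<forall>k\<in>K. A k = (\<Sum>l\<in>L. csmult (trace (\<sigma> l ** A k)) (G l))"
    by blast
  from pv have fin: "finite L" and ps: "\<forall>l\<in>L. psd (G l)" by (auto simp: povm_def)
  define a where "a m = trace (\<sigma> m ** A1)" for m
  define b1 where "b1 m = trace (\<sigma> m ** B1)" for m
  define b2 where "b2 m = trace (\<sigma> m ** (mat 1 - B1))" for m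
  have A1e: "A1 = (\<Sum>l\<in>L. csmult (a l) (G l))"
    using eqs unfolding a_def by (simp add: Aobs_def)
  have B1e: "B1 = (\<Sum>l\<in>L. csmult (b1 l) (G l))"
    using eqs unfolding b1_def by (simp add: Bobs_def)
  have B2e: "mat 1 - B1 = (\<Sum>l\<in>L. csmult (b2 l) (G l))"
    using eqs unfolding b2_def by (simp add: Bobs_def)
  have QAs: "Q A1 x = (\<Sum>m\<in>L. Re (a m) * Q (G m) x)" for x
    using Qsum[OF fin ps, of a x] A1e by simp
  have QB1s: "Q B1 x = (\<Sum>m\<in>L. Re (b1 m) * Q (G m) x)" for x
    using Qsum[OF fin ps, of b1 x] B1e by simp
  have QB2s: "Q (mat 1 - B1) x = (\<Sum>m\<in>L. Re (b2 m) * Q (G m) x)" for x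
    using Qsum[OF fin ps, of b2 x] B2e by simp
  have psig: "psd (\<sigma> m)" if "m \<in> L" for m using den that by (simp add: density_def)
  have a0: "0 \<le> Re (a m)" if "m \<in> L" for m
    using psd_Q[OF psig[OF that], of uu] unfolding a_def tA1 Q_def by simp
  have b10: "0 \<le> Re (b1 m)" if "m \<in> L" for m
    using diag_nn[OF psig[OF that], of 0] diag_nn[OF psig[OF that], of 2] unfolding b1_def tB1 by simp
  have b20: "0 \<le> Re (b2 m)" if "m \<in> L" for m
    using diag_nn[OF psig[OF that], of 1] diag_nn[OF psig[OF that], of 2] unfolding b2_def tB2 by simp
  have nnA: "\<forall>m\<in>L. 0 \<le> Re (a m) * Q (G m) x" for x using a0 ps psd_Q by auto
  have nnB2: "\<forall>m\<in>L. 0 \<le> Re (b2 m) * Q (G m) x" for x using b20 ps psd_Q by auto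
  have claim: "Re (a m) * Q (G m) uu \<le> 1/2 * (Re (b1 m) * Q (G m) uu)" if mL: "m \<in> L" for m
  proof -
    have Qn: "0 \<le> Q (G m) uu" using ps mL psd_Q by auto
    have rhs: "0 \<le> 1/2 * (Re (b1 m) * Q (G m) uu)" using Qn b10[OF mL] by simp
    show ?thesis
    proof (cases "Re (a m) = 0")
      case True then show ?thesis using rhs by simp
    next
      case False
      then have pl: "Re (a m) > 0" using a0[OF mL] by simp
      have "Re (a m) * Q (G m) ww = 0"
        using sum_zero_term[OF fin nnA _ mL] QAs[of ww] QA1w by simp
      then have Qw: "Q (G m) ww = 0" using pl by simp
      have "Re (a m) * Q (G m) (ket 1) = 0"
        using sum_zero_term[OF fin nnA _ mL] QAs[of "ket 1"] QA1e1 by simp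
      then have Q1: "Q (G m) (ket 1) = 0" using pl by simp
      obtain d where d0: "d \<ge> 0" and Gm: "G m = csmult (complex_of_real d) (csmult 4 A1)"
        using keyK[of "G m"] ps mL Qw Q1 by blast
      show ?thesis
      proof (cases "d = 0")
        case True
        then have "Q (G m) uu = 0" unfolding Gm Q_G by simp
        then show ?thesis by simp
      next
        case False
        then have dp: "d > 0" using d0 by simp
        have QGe0: "Q (G m) (ket 0) = 2 * d" unfolding Gm Q_G QA1e0 by simp
        have "Re (b2 m) * Q (G m) (ket 0) = 0"
          using sum_zero_term[OF fin nnB2 _ mL] QB2s[of "ket 0"] QB2e0 by simp
        then have "Re (b2 m) = 0" using QGe0 dp by simp
        define S where "S = \<sigma> m"
        have pS: "psd S" unfolding S_def using psig[OF mL] .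
        have "Re (S$1$1) + Re (S$2$2)/2 = 0" using \<open>Re (b2 m) = 0\<close> unfolding b2_def tB2 S_def by simp
        then have "Re (S$2$2) = 0" "Re (S$1$1) = 0" using diag_nn[OF pS, of 1] diag_nn[OF pS, of 2] by auto
        then have s22: "S$2$2 = 0" and s11: "S$1$1 = 0"
          using diag_nn[OF pS, of 1] diag_nn[OF pS, of 2] by (auto simp: complex_eq_iff)
        have "Q S (ket 2) = 0" using s22 by (simp add: Q_def entry)
        then have "S *v ket 2 = 0" using psd_zero pS by blast
        then have c2: "S$r$2 = 0" for r using mv_ket[of S 2 r] by simp
        have r2: "S$2$r = 0" for r using psd_herm[OF pS, of "ket 2" "ket r"] c2[of r] by (simp add: entry)
        have "trace S = 1" using den mL unfolding S_def density_def by simp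
        then have s00: "S$0$0 = 1" using s11 s22 unfolding tr3 by simp
        have am: "a m = 1/2" unfolding a_def tA1' S_def[symmetric] using s00 c2 r2 by simp
        have bm: "b1 m = 1" unfolding b1_def tB1 S_def[symmetric] using s00 s22 by simp
        have ra: "Re (a m) = 1/2" unfolding am by simp
        have "Re (b1 m) = 1" unfolding bm by simp
        then show ?thesis unfolding ra by simp
      qed
    qed
  qed
  have "Q A1 uu \<le> (\<Sum>m\<in>L. 1/2 * (Re (b1 m) * Q (G m) uu))"
    unfolding QAs by (rule sum_mono) (use claim in auto)
  also have "\<dots> = 1/2 * Q B1 uu" unfolding QB1s by (simp add: sum_distrib_left)
  finally show False using QA1u QB1u by simp
qed

theorem mainTheorem6:
  shows "(\<not> (\<exists>L G. povm L G \<and> (\<forall>l\<in>L. opnorm (G l) = 1) \<and>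
                postproc {1,2} Aobs L G \<and> postproc {1,2} Bobs L G))
         \<and> allows_contextuality_proof {({1,2}, Aobs), ({1,2}, Bobs)}"
  using part1 part2 by blast

end
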